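(* Let $n\ge 1$, let $C_u(v_1),\ldots,C_u(v_n)>0$ and $R_1,\ldots,R_n>0$ be sustainable, i.e. $R_i\le C_u(v_i)$ for all $i$, $\sum_{j\ne i}R_j\le C_d(v_i)$ for all $i$ (for some downlink capacities $C_d(v_i)>0$), and $(n-1)\sum_{i=1}^n R_i\le\sum_{i=1}^n C_u(v_i)$. Run the algorithm described in the context on these inputs. Then for every $\alpha$ with $1\le\alpha\le n$, $$\sum_{i=1}^n U_i[\alpha] \geq (n-2)\sum_{i=\alpha}^n R_i.$$
   Context: Sub-stream rate assigning algorithm. Input: $n$, uplink capacities $C_u(v_1),\ldots,C_u(v_n)$ and rates $R_1,\ldots,R_n$. Initialize $r_{i,j}:=0$ for all $1\le i,j\le n$ and $U_i := C_u(v_i)-R_i$ for $1\le i\le n$. Outer loop: for $i=1$ to $n$: set $R'_i := R_i$; inner loop: for $j=1$ to $n$: if $(n-2)R'_i > U_j$ then set $r_{i,j} := U_j/(n-2)$, else set $r_{i,j} := R'_i$; then set $U_j := U_j-(n-2)r_{i,j}$ and $R'_i := R'_i - r_{i,j}$; if $R'_i = 0$, exit the inner loop. Output all $r_{i,j}$. Notation: $U_i[\alpha]$ denotes the value of the variable $U_i$ at the start of iteration $\alpha$ of the outer loop. *)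

theory Defs
  imports Complex_Main
begin

text \<open>Inner loop of the sub-stream rate assigning algorithm.
  inner_loop n j k U R' row: process indices j, j+1, ..., j+k-1 (k = remaining iterations),
  with current uplink residuals U, remaining rate R' and current row r_{i,.}.\<close>
fun inner_loop :: "nat \<Rightarrow> nat \<Rightarrow> nat \<Rightarrow> (nat \<Rightarrow> real) \<Rightarrow> real \<Rightarrow> (nat \<Rightarrow> real)
    \<Rightarrow> (nat \<Rightarrow> real) \<times> real \<times> (nat \<Rightarrow> real)" where
  "inner_loop n j 0 U R' row = (U, R', row)"
| "inner_loop n j (Suc k) U R' row =
     (let x = (if (real n - 2) * R' > U j then U j / (real n - 2) else R');
          U' = U(j := U j - (real n - 2) * x);
          R'' = R' - x;
          row' = row(j := x)
      in if R'' = 0 then (U', R'', row') else inner_loop n (Suc j) k U' R'' row')"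

text \<open>alg_state n Cu R k = (U, r) after k iterations of the outer loop;
  U is indexed by 1..n, r by (i,j) with 1 \<le> i,j \<le> n.\<close>
fun alg_state :: "nat \<Rightarrow> (nat \<Rightarrow> real) \<Rightarrow> (nat \<Rightarrow> real) \<Rightarrow> nat
    \<Rightarrow> (nat \<Rightarrow> real) \<times> (nat \<Rightarrow> nat \<Rightarrow> real)" where
  "alg_state n Cu R 0 = ((\<lambda>i. Cu i - R i), (\<lambda>i j. 0))"
| "alg_state n Cu R (Suc k) =
     (let (U, r) = alg_state n Cu R k;
          (U', _, row) = inner_loop n 1 n U (R (Suc k)) (\<lambda>_. 0)
      in (U', r(Suc k := row)))"

text \<open>U_i[alpha]: value of U_i at the start of iteration alpha of the outer loop (alpha \<ge> 1).\<close>
definition U_at :: "nat \<Rightarrow> (nat \<Rightarrow> real) \<Rightarrow> (nat \<Rightarrow> real) \<Rightarrow> nat \<Rightarrow> nat \<Rightarrow> real" where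
  "U_at n Cu R \<alpha> i = fst (alg_state n Cu R (\<alpha> - 1)) i"

end

theory Submission
  imports Defs
begin

lemma inner_sum:
  assumes "finite S" "{j..<j+k} \<subseteq> S"
  shows "sum (fst (inner_loop n j k U R' row)) S - (real n - 2) * fst (snd (inner_loop n j k U R' row))
         = sum U S - (real n - 2) * R'"
  using assms
proof (induction k arbitrary: j U R' row)
  case 0
  then show ?case by simp
next
  case (Suc k)
  define x where "x = (if (real n - 2) * R' > U j then U j / (real n - 2) else R')"
  have jS: "j \<in> S" using Suc.prems by auto
  have sumU: "sum (U(j := U j - (real n - 2) * x)) S = sum U S - (real n - 2) * x"
  proof -
    let ?V = "U(j := U j - (real n - 2) * x)"
    have a: "sum ?V S = ?V j + sum ?V (S - {j})" by (rule sum.remove[OF Suc.prems(1) jS])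
    have b: "sum U S = U j + sum U (S - {j})" by (rule sum.remove[OF Suc.prems(1) jS])
    have c: "sum ?V (S - {j}) = sum U (S - {j})" by (rule sum.cong) auto
    show ?thesis using a b c by simp
  qed
  have IH: "sum (fst (inner_loop n (Suc j) k (U(j := U j - (real n - 2) * x)) (R' - x) (row(j := x)))) S
     - (real n - 2) * fst (snd (inner_loop n (Suc j) k (U(j := U j - (real n - 2) * x)) (R' - x) (row(j := x))))
     = sum (U(j := U j - (real n - 2) * x)) S - (real n - 2) * (R' - x)"
  proof -
    have "{Suc j..<Suc j + k} \<subseteq> S" using Suc.prems(2) by auto
    then show ?thesis using Suc.IH[OF Suc.prems(1)] by blast
  qed
  have unf: "inner_loop n j (Suc k) U R' row = (if R' - x = 0 then (U(j := U j - (real n - 2) * x), R' - x, row(j:=x))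
     else inner_loop n (Suc j) k (U(j := U j - (real n - 2) * x)) (R' - x) (row(j := x)))"
    by (simp only: inner_loop.simps Let_def x_def)
  show ?case
  proof (cases "R' - x = 0")
    case True
    then show ?thesis using unf sumU by simp
  next
    case False
    then have "inner_loop n j (Suc k) U R' row = inner_loop n (Suc j) k (U(j := U j - (real n - 2) * x)) (R' - x) (row(j := x))"
      using unf by simp
    moreover have "sum U S - (real n - 2) * x - (real n - 2) * (R' - x) = sum U S - (real n - 2) * R'"
      by (simp add: right_diff_distrib)
    ultimately show ?thesis using IH sumU by (simp only:)
  qed
qed

lemma inner_nonneg:
  assumes "real n - 2 \<ge> 0" "R' \<ge> 0"
  shows "fst (snd (inner_loop n j k U R' row)) \<ge> 0"
  using assms
proof (induction k arbitrary: j U R' row)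
  case 0
  then show ?case by simp
next
  case (Suc k)
  define x where "x = (if (real n - 2) * R' > U j then U j / (real n - 2) else R')"
  have "R' - x \<ge> 0"
  proof (cases "(real n - 2) * R' > U j")
    case True
    show ?thesis
    proof (cases "real n - 2 = 0")
      case True
      then show ?thesis using Suc.prems by (simp add: x_def)
    next
      case False
      then have p: "real n - 2 > 0" using Suc.prems by linarith
      have "U j / (real n - 2) < R'" using True p by (simp add: divide_less_eq mult.commute)
      then show ?thesis using True by (simp add: x_def)
    qed
  next
    case False
    then show ?thesis by (simp add: x_def)
  qed
  have unf: "inner_loop n j (Suc k) U R' row = (if R' - x = 0 then (U(j := U j - (real n - 2) * x), R' - x, row(j:=x))
     else inner_loop n (Suc j) k (U(j := U j - (real n - 2) * x)) (R' - x) (row(j := x)))"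
    by (simp only: inner_loop.simps Let_def x_def)
  show ?case
  proof (cases "R' - x = 0")
    case True
    then show ?thesis using unf by simp
  next
    case False
    then have "inner_loop n j (Suc k) U R' row = inner_loop n (Suc j) k (U(j := U j - (real n - 2) * x)) (R' - x) (row(j := x))"
      using unf by simp
    then show ?thesis using Suc.IH[OF Suc.prems(1) \<open>R' - x \<ge> 0\<close>] by simp
  qed
qed

lemma main_step:
  assumes "n \<ge> 1" "\<forall>i\<in>{1..n}. R i > 0"
    and "(real n - 1) * (\<Sum>i=1..n. R i) \<le> (\<Sum>i=1..n. Cu i)"
  shows "k < n \<Longrightarrow> (\<Sum>i=1..n. fst (alg_state n Cu R k) i) \<ge> (real n - 2) * (\<Sum>i=Suc k..n. R i)"
proof (induction k)
  case 0
  have "(\<Sum>i=1..n. fst (alg_state n Cu R 0) i) = (\<Sum>i=1..n. Cu i) - (\<Sum>i=1..n. R i)"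
    by (simp add: sum_subtractf)
  then show ?case using assms(3) by (simp add: algebra_simps)
next
  case (Suc k)
  obtain U r where st: "alg_state n Cu R k = (U, r)" by (cases "alg_state n Cu R k")
  obtain U' Rf row where il: "inner_loop n 1 n U (R (Suc k)) (\<lambda>_. 0) = (U', Rf, row)"
    by (cases "inner_loop n 1 n U (R (Suc k)) (\<lambda>_. 0)") auto
  have n2: "real n - 2 \<ge> 0" using Suc.prems by simp
  have Rpos: "R (Suc k) > 0" using assms(2) Suc.prems by auto
  have IH: "(\<Sum>i=1..n. U i) \<ge> (real n - 2) * (\<Sum>i=Suc k..n. R i)"
    using Suc.IH Suc.prems st by simp
  have eq: "sum U' {1..n} - (real n - 2) * Rf = sum U {1..n} - (real n - 2) * R (Suc k)"
  proof -
    have sub: "{1..<1+n} \<subseteq> {1..n}" by auto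
    show ?thesis using inner_sum[OF _ sub, of n U "R (Suc k)" "\<lambda>_. 0"] il by simp
  qed
  have Rf: "Rf \<ge> 0" using inner_nonneg[OF n2, of "R (Suc k)" 1 n U "\<lambda>_. 0"] Rpos il by auto
  have "(\<Sum>i=Suc k..n. R i) = R (Suc k) + (\<Sum>i=Suc (Suc k)..n. R i)"
    using Suc.prems by (simp add: sum.atLeast_Suc_atMost)
  moreover have "(real n - 2) * Rf \<ge> 0" using n2 Rf by simp
  moreover have "fst (alg_state n Cu R (Suc k)) = U'" using st il by simp
  ultimately show ?case using IH eq by (simp add: algebra_simps)
qed

theorem propositionB2:
  fixes n :: nat and Cu Cd R :: "nat \<Rightarrow> real"
  assumes "n \<ge> 1"
    and "\<forall>i\<in>{1..n}. Cu i > 0"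
    and "\<forall>i\<in>{1..n}. Cd i > 0"
    and "\<forall>i\<in>{1..n}. R i > 0"
    and "\<forall>i\<in>{1..n}. R i \<le> Cu i"
    and "\<forall>i\<in>{1..n}. (\<Sum>j\<in>{1..n} - {i}. R j) \<le> Cd i"
    and "(real n - 1) * (\<Sum>i=1..n. R i) \<le> (\<Sum>i=1..n. Cu i)"
  shows "\<forall>\<alpha>\<in>{1..n}. (\<Sum>i=1..n. U_at n Cu R \<alpha> i) \<ge> (real n - 2) * (\<Sum>i=\<alpha>..n. R i)"
proof
  fix a assume a: "a \<in> {1..n}"
  have "a - 1 < n" using a by auto
  from main_step[OF assms(1) assms(4) assms(7) this] a
  show "(\<Sum>i=1..n. U_at n Cu R a i) \<ge> (real n - 2) * (\<Sum>i=a..n. R i)"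
    by (simp add: U_at_def)
qed

end
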